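(* Fix $i\in\{1,\dots,\bar m\}$. Suppose $(A,B,K,\bar b,\bar D_{[i]})$ with $\bar D_{[i]}\in\mathbb{D}_+^{\bar m}$ satisfies condition (PI$_i$). Consider the LMI in the variables $(\mathbf A,\mathbf B,\mathbf K,\bar{\mathbf b},\hat{\bar{\mathbf D}}_{[i]})$: $$\begin{bmatrix} \mathbf I & \mathbf 0 & -\mathbf B^\top\bar P_i^\top & \mathbf K\\ * & \hat{\bar{\mathbf D}}_{[i]} & \bar{\mathbf b} & \mathbf 0\\ * & * & 2\bar{\mathbf b}_i+\mathcal{L}^{B^\top\bar P_i^\top,\mathbf I}_{\mathbf B^\top\bar P_i^\top,\mathbf I} & \bar P_i\mathbf A\\ * & * & * & \mathcal{L}^{\bar P,\bar D_{[i]}^{-1}}_{\bar P,\hat{\bar{\mathbf D}}_{[i]}}+\mathcal{L}^{K,\mathbf I}_{\mathbf K,\mathbf I} \end{bmatrix}\succ0 .$$ Then (a) it is satisfied by $(A,B,K,\bar b,\bar D_{[i]}^{-1})$; and (b) any solution with $\hat{\bar{\mathbf D}}_{[i]}\in\mathbb{D}_+^{\bar m}$ is such that $(\mathbf A,\mathbf B,\mathbf K,\bar{\mathbf b},\hat{\bar{\mathbf D}}_{[i]}^{-1})$ satisfies condition (PI$_i$).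
   Context: Notation: $M_i$ is the $i$-th row of $M$, $b_i$ the $i$-th entry of $b$; $\mathbb{D}_+^m$ is the set of $m\times m$ diagonal matrices with positive diagonal; $\succ0$ means symmetric positive definite; $*$ denotes symmetric blocks; $\mathbf I,\mathbf 0$ identity/zero blocks of appropriate size (the first diagonal $\mathbf I$ is $n_u\times n_u$). For $\mathbf L,L\in\mathbb{R}^{m\times n}$ and symmetric invertible $\mathbf D,D\in\mathbb{R}^{m\times m}$, $\mathcal{L}^{L,D}_{\mathbf L,\mathbf D}:=\mathbf L^\top D^{-1}L+L^\top D^{-1}\mathbf L-L^\top D^{-1}\mathbf DD^{-1}L$. Fixed data: $\bar P\in\mathbb{R}^{\bar m\times n_x}$. Variables: $A\in\mathbb{R}^{n_x\times n_x}$, $B\in\mathbb{R}^{n_x\times n_u}$, $K\in\mathbb{R}^{n_u\times n_x}$, $\bar b\in\mathbb{R}^{\bar m}$ (bold versions same sizes). Condition (PI$_i$) for $(A,B,K,\bar b,\bar D_{[i]})$: $$\begin{bmatrix}2\bar b_i-\bar b^\top\bar D_{[i]}\bar b & \bar P_i(A+BK)\\ * & \bar P^\top\bar D_{[i]}\bar P\end{bmatrix}\succ0.$$ *)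

theory Defs
  imports "Jordan_Normal_Form.Matrix"
begin

definition pos_def_mat :: "nat \<Rightarrow> real mat \<Rightarrow> bool" where
  "pos_def_mat n M \<longleftrightarrow> M \<in> carrier_mat n n \<and> transpose_mat M = M \<and>
     (\<forall>x \<in> carrier_vec n. x \<noteq> 0\<^sub>v n \<longrightarrow> x \<bullet> (M *\<^sub>v x) > 0)"

definition diag_pos_mat :: "nat \<Rightarrow> real mat \<Rightarrow> bool" where
  "diag_pos_mat m D \<longleftrightarrow> D \<in> carrier_mat m m \<and> diagonal_mat D \<and> (\<forall>j<m. D $$ (j,j) > 0)"

(* \<L>^{L,D}_{Lb,Db}; the argument Dinv is the inverse D^{-1} of the (plain) matrix D *)
definition Lop :: "real mat \<Rightarrow> real mat \<Rightarrow> real mat \<Rightarrow> real mat \<Rightarrow> real mat" where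
  "Lop Lb Db L Dinv = transpose_mat Lb * Dinv * L + transpose_mat L * Dinv * Lb
                      - transpose_mat L * Dinv * Db * Dinv * L"

definition row_mat :: "real mat \<Rightarrow> nat \<Rightarrow> real mat" where
  "row_mat P i = mat_of_row (row P i)"

definition scal_mat :: "real \<Rightarrow> real mat" where
  "scal_mat c = mat 1 1 (\<lambda>_. c)"

definition block4 ::
  "real mat \<Rightarrow> real mat \<Rightarrow> real mat \<Rightarrow> real mat \<Rightarrow>
   real mat \<Rightarrow> real mat \<Rightarrow> real mat \<Rightarrow> real mat \<Rightarrow>
   real mat \<Rightarrow> real mat \<Rightarrow> real mat \<Rightarrow> real mat \<Rightarrow>
   real mat \<Rightarrow> real mat \<Rightarrow> real mat \<Rightarrow> real mat \<Rightarrow> real mat" where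
  "block4 M11 M12 M13 M14 M21 M22 M23 M24 M31 M32 M33 M34 M41 M42 M43 M44 =
     four_block_mat
       (four_block_mat M11 M12 M21 M22) (four_block_mat M13 M14 M23 M24)
       (four_block_mat M31 M32 M41 M42) (four_block_mat M33 M34 M43 M44)"

definition PI_cond :: "nat \<Rightarrow> real mat \<Rightarrow> nat \<Rightarrow>
    real mat \<Rightarrow> real mat \<Rightarrow> real mat \<Rightarrow> real vec \<Rightarrow> real mat \<Rightarrow> bool" where
  "PI_cond nx Pbar i A B K b D \<longleftrightarrow>
     pos_def_mat (1 + nx)
       (four_block_mat
          (scal_mat (2 * b $ i - b \<bullet> (D *\<^sub>v b)))  (row_mat Pbar i * (A + B * K))
          (transpose_mat (row_mat Pbar i * (A + B * K)))  (transpose_mat Pbar * D * Pbar))"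

(* The LMI of Theorem 3, with fixed (B,K,Dbar) from the given solution of (PI_i),
   in the variables (Ab,Bb,Kb,bb,Dh) *)
definition LMI_i :: "nat \<Rightarrow> nat \<Rightarrow> nat \<Rightarrow> real mat \<Rightarrow> nat \<Rightarrow>
    real mat \<Rightarrow> real mat \<Rightarrow> real mat \<Rightarrow>
    real mat \<Rightarrow> real mat \<Rightarrow> real mat \<Rightarrow> real vec \<Rightarrow> real mat \<Rightarrow> bool" where
  "LMI_i nx nu m Pbar i B K Dbar Ab Bb Kb bb Dh \<longleftrightarrow>
     (let Pi = row_mat Pbar i;
          M11 = 1\<^sub>m nu; M12 = 0\<^sub>m nu m;
          M13 = - (transpose_mat Bb * transpose_mat Pi); M14 = Kb;
          M22 = Dh; M23 = mat_of_cols m [bb]; M24 = 0\<^sub>m m nx;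
          M33 = scal_mat (2 * bb $ i)
                + Lop (transpose_mat Bb * transpose_mat Pi) (1\<^sub>m nu)
                      (transpose_mat B * transpose_mat Pi) (1\<^sub>m nu);
          M34 = Pi * Ab;
          M44 = Lop Pbar Dh Pbar Dbar + Lop Kb (1\<^sub>m nu) K (1\<^sub>m nu)
      in pos_def_mat (nu + m + 1 + nx)
           (block4 M11 M12 M13 M14
                   (transpose_mat M12) M22 M23 M24
                   (transpose_mat M13) (transpose_mat M23) M33 M34
                   (transpose_mat M14) (transpose_mat M24) (transpose_mat M34) M44))"

end

theory Submission
  imports Defs
begin


lemma quad2:
  fixes A B C D :: "real mat"
  assumes "A \<in> carrier_mat n1 n1" "B \<in> carrier_mat n1 n2" "C \<in> carrier_mat n2 n1" "D \<in> carrier_mat n2 n2"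
    "a \<in> carrier_vec n1" "d \<in> carrier_vec n2"
  shows "(a @\<^sub>v d) \<bullet> (four_block_mat A B C D *\<^sub>v (a @\<^sub>v d)) = a \<bullet> (A *\<^sub>v a) + a \<bullet> (B *\<^sub>v d) + d \<bullet> (C *\<^sub>v a) + d \<bullet> (D *\<^sub>v d)"
proof -
  have "(a @\<^sub>v d) \<bullet> (four_block_mat A B C D *\<^sub>v (a @\<^sub>v d)) = (a @\<^sub>v d) \<bullet> ((A *\<^sub>v a + B *\<^sub>v d) @\<^sub>v (C *\<^sub>v a + D *\<^sub>v d))"
    using four_block_mat_mult_vec[OF assms] by simp
  also have "\<dots> = a \<bullet> (A *\<^sub>v a + B *\<^sub>v d) + d \<bullet> (C *\<^sub>v a + D *\<^sub>v d)"
    by (rule scalar_prod_append[of _ n1 _ n2], insert assms, auto)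
  also have "\<dots> = a \<bullet> (A *\<^sub>v a) + a \<bullet> (B *\<^sub>v d) + d \<bullet> (C *\<^sub>v a) + d \<bullet> (D *\<^sub>v d)"
    using assms by (simp add: scalar_prod_add_distrib[of _ n1] scalar_prod_add_distrib[of _ n2])
  finally show ?thesis .
qed

lemma tr_sp:
  fixes B :: "real mat"
  assumes "B \<in> carrier_mat n1 n2" "a \<in> carrier_vec n1" "v \<in> carrier_vec n2"
  shows "v \<bullet> (transpose_mat B *\<^sub>v a) = a \<bullet> (B *\<^sub>v v)"
  using transpose_vec_mult_scalar[OF assms(1,3,2)] comm_scalar_prod[of v n2 "transpose_mat B *\<^sub>v a"] assms
  by auto

lemma quad2_sym:
  fixes A B D :: "real mat"
  assumes "A \<in> carrier_mat n1 n1" "B \<in> carrier_mat n1 n2" "D \<in> carrier_mat n2 n2"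
    "a \<in> carrier_vec n1" "d \<in> carrier_vec n2"
  shows "(a @\<^sub>v d) \<bullet> (four_block_mat A B (transpose_mat B) D *\<^sub>v (a @\<^sub>v d)) = a \<bullet> (A *\<^sub>v a) + 2 * (a \<bullet> (B *\<^sub>v d)) + d \<bullet> (D *\<^sub>v d)"
  using quad2[OF assms(1,2) _ assms(3-5), of "transpose_mat B"] tr_sp[OF assms(2,4,5)] assms by auto

lemma quad4_sym:
  fixes M11 M12 M13 M14 M22 M23 M24 M33 M34 M44 :: "real mat"
  assumes c: "M11 \<in> carrier_mat n1 n1" "M12 \<in> carrier_mat n1 n2" "M13 \<in> carrier_mat n1 n3" "M14 \<in> carrier_mat n1 n4"
     "M22 \<in> carrier_mat n2 n2" "M23 \<in> carrier_mat n2 n3" "M24 \<in> carrier_mat n2 n4"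
     "M33 \<in> carrier_mat n3 n3" "M34 \<in> carrier_mat n3 n4" "M44 \<in> carrier_mat n4 n4"
   and x: "x1 \<in> carrier_vec n1" "x2 \<in> carrier_vec n2" "x3 \<in> carrier_vec n3" "x4 \<in> carrier_vec n4"
  shows "((x1 @\<^sub>v x2) @\<^sub>v (x3 @\<^sub>v x4)) \<bullet> (block4 M11 M12 M13 M14
                   (transpose_mat M12) M22 M23 M24
                   (transpose_mat M13) (transpose_mat M23) M33 M34
                   (transpose_mat M14) (transpose_mat M24) (transpose_mat M34) M44 *\<^sub>v ((x1 @\<^sub>v x2) @\<^sub>v (x3 @\<^sub>v x4)))
   = x1 \<bullet> (M11 *\<^sub>v x1) + x2 \<bullet> (M22 *\<^sub>v x2) + x3 \<bullet> (M33 *\<^sub>v x3) + x4 \<bullet> (M44 *\<^sub>v x4)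
     + 2 * (x1 \<bullet> (M12 *\<^sub>v x2)) + 2 * (x1 \<bullet> (M13 *\<^sub>v x3)) + 2 * (x1 \<bullet> (M14 *\<^sub>v x4))
     + 2 * (x2 \<bullet> (M23 *\<^sub>v x3)) + 2 * (x2 \<bullet> (M24 *\<^sub>v x4)) + 2 * (x3 \<bullet> (M34 *\<^sub>v x4))"
proof -
  let ?A = "four_block_mat M11 M12 (transpose_mat M12) M22"
  let ?B = "four_block_mat M13 M14 M23 M24"
  let ?D = "four_block_mat M33 M34 (transpose_mat M34) M44"
  have tB: "transpose_mat ?B = four_block_mat (transpose_mat M13) (transpose_mat M23) (transpose_mat M14) (transpose_mat M24)"
    using transpose_four_block_mat[OF c(3,4,6,7)] .
  have e: "block4 M11 M12 M13 M14
                   (transpose_mat M12) M22 M23 M24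
                   (transpose_mat M13) (transpose_mat M23) M33 M34
                   (transpose_mat M14) (transpose_mat M24) (transpose_mat M34) M44 = four_block_mat ?A ?B (transpose_mat ?B) ?D"
    unfolding block4_def tB ..
  have cA: "?A \<in> carrier_mat (n1+n2) (n1+n2)" using c by auto
  have cB: "?B \<in> carrier_mat (n1+n2) (n3+n4)" using c by auto
  have cD: "?D \<in> carrier_mat (n3+n4) (n3+n4)" using c by auto
  have "(x1 @\<^sub>v x2) \<bullet> (?B *\<^sub>v (x3 @\<^sub>v x4)) = x1 \<bullet> (M13 *\<^sub>v x3) + x1 \<bullet> (M14 *\<^sub>v x4) + x2 \<bullet> (M23 *\<^sub>v x3) + x2 \<bullet> (M24 *\<^sub>v x4)"
  proof -
    have "(x1 @\<^sub>v x2) \<bullet> (?B *\<^sub>v (x3 @\<^sub>v x4)) = (x1 @\<^sub>v x2) \<bullet> ((M13 *\<^sub>v x3 + M14 *\<^sub>v x4) @\<^sub>v (M23 *\<^sub>v x3 + M24 *\<^sub>v x4))"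
      using four_block_mat_mult_vec[OF c(3,4,6,7) x(3,4)] by simp
    also have "\<dots> = x1 \<bullet> (M13 *\<^sub>v x3 + M14 *\<^sub>v x4) + x2 \<bullet> (M23 *\<^sub>v x3 + M24 *\<^sub>v x4)"
      by (rule scalar_prod_append[of _ n1 _ n2], insert c x, auto)
    also have "\<dots> = x1 \<bullet> (M13 *\<^sub>v x3) + x1 \<bullet> (M14 *\<^sub>v x4) + x2 \<bullet> (M23 *\<^sub>v x3) + x2 \<bullet> (M24 *\<^sub>v x4)"
      using c x by (simp add: scalar_prod_add_distrib[of _ n1] scalar_prod_add_distrib[of _ n2])
    finally show ?thesis .
  qed
  then show ?thesis
    unfolding e quad2_sym[OF cA cB cD append_carrier_vec[OF x(1,2)] append_carrier_vec[OF x(3,4)]]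
      quad2_sym[OF c(1,2,5) x(1,2)] quad2_sym[OF c(8,9,10) x(3,4)]
    by simp
qed

lemma F1: assumes "q \<in> carrier_vec n"
  shows "transpose_mat (mat_of_row q) *\<^sub>v vec 1 (\<lambda>_. s) = s \<cdot>\<^sub>v (q :: real vec)"
  using assms by (intro eq_vecI, auto simp: mat_of_row_def scalar_prod_def)

lemma F2: assumes "q \<in> carrier_vec n" "z \<in> carrier_vec n"
  shows "vec 1 (\<lambda>_. s) \<bullet> (mat_of_row q *\<^sub>v z) = s * (q \<bullet> (z :: real vec))"
  using assms by (auto simp: mat_of_row_def scalar_prod_def mult_mat_vec_def row_def)

lemma F3: "vec 1 (\<lambda>_. s) \<bullet> (scal_mat a *\<^sub>v vec 1 (\<lambda>_. s)) = s * s * (a::real)"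
  by (auto simp: scal_mat_def scalar_prod_def mult_mat_vec_def row_def)

lemma F4: assumes "w \<in> carrier_vec m" "bb \<in> carrier_vec m"
  shows "w \<bullet> (mat_of_cols m [bb] *\<^sub>v vec 1 (\<lambda>_. s)) = s * (w \<bullet> (bb :: real vec))"
proof -
  have "mat_of_cols m [bb] *\<^sub>v vec 1 (\<lambda>_. s) = s \<cdot>\<^sub>v bb"
    using assms by (intro eq_vecI, auto simp: mat_of_cols_def scalar_prod_def mult_mat_vec_def row_def)
  then show ?thesis using assms by simp
qed

lemma quadL:
  fixes Lb L D Dinv :: "real mat"
  assumes "Lb \<in> carrier_mat p n" "L \<in> carrier_mat p n" "D \<in> carrier_mat p p" "Dinv \<in> carrier_mat p p"
    "transpose_mat Dinv = Dinv" "v \<in> carrier_vec n"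
  shows "v \<bullet> (Lop Lb D L Dinv *\<^sub>v v) = (Lb *\<^sub>v v) \<bullet> (Dinv *\<^sub>v (L *\<^sub>v v)) + (L *\<^sub>v v) \<bullet> (Dinv *\<^sub>v (Lb *\<^sub>v v))
     - (Dinv *\<^sub>v (L *\<^sub>v v)) \<bullet> (D *\<^sub>v (Dinv *\<^sub>v (L *\<^sub>v v)))"
proof -
  have 1: "v \<bullet> ((transpose_mat X * Y) *\<^sub>v v) = (X *\<^sub>v v) \<bullet> (Y *\<^sub>v v)" if "X \<in> carrier_mat p n" "Y \<in> carrier_mat p n" for X Y
    using tr_sp[OF that(1), of "Y *\<^sub>v v" v] that assms(6) comm_scalar_prod[of "Y *\<^sub>v v" p "X *\<^sub>v v"] by simp
  have e1: "transpose_mat Lb * Dinv * L = transpose_mat Lb * (Dinv * L)" using assms by auto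
  have e2: "transpose_mat L * Dinv * Lb = transpose_mat L * (Dinv * Lb)" using assms by auto
  have e3: "transpose_mat L * Dinv * D * Dinv * L = transpose_mat (Dinv * L) * (D * (Dinv * L))"
  proof -
    have t: "transpose_mat (Dinv * L) = transpose_mat L * Dinv" using transpose_mult[of Dinv p p L n] assms by simp
    have "transpose_mat L * Dinv * D * Dinv * L = (transpose_mat L * Dinv * D) * (Dinv * L)"
      by (rule assoc_mult_mat[of _ n p _ p _ n], insert assms, auto)
    also have "\<dots> = (transpose_mat L * Dinv) * (D * (Dinv * L))"
      by (rule assoc_mult_mat[of _ n p _ p _ n], insert assms, auto)
    finally show ?thesis unfolding t .
  qed
  have c: "transpose_mat Lb * Dinv * L \<in> carrier_mat n n" "transpose_mat L * Dinv * Lb \<in> carrier_mat n n"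
    "transpose_mat L * Dinv * D * Dinv * L \<in> carrier_mat n n" using assms by auto
  have "v \<bullet> (Lop Lb D L Dinv *\<^sub>v v) = v \<bullet> ((transpose_mat Lb * Dinv * L) *\<^sub>v v) + v \<bullet> ((transpose_mat L * Dinv * Lb) *\<^sub>v v)
     - v \<bullet> ((transpose_mat L * Dinv * D * Dinv * L) *\<^sub>v v)"
    unfolding Lop_def using c assms(6)
    by (simp add: minus_mult_distrib_mat_vec[of _ n n] add_mult_distrib_mat_vec[of _ n n]
        scalar_prod_minus_distrib[of _ n] scalar_prod_add_distrib[of _ n])
  also have "\<dots> = (Lb *\<^sub>v v) \<bullet> ((Dinv * L) *\<^sub>v v) + (L *\<^sub>v v) \<bullet> ((Dinv * Lb) *\<^sub>v v) - ((Dinv * L) *\<^sub>v v) \<bullet> ((D * (Dinv * L)) *\<^sub>v v)"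
    unfolding e1 e2 e3 using assms by (simp add: 1)
  also have "\<dots> = (Lb *\<^sub>v v) \<bullet> (Dinv *\<^sub>v (L *\<^sub>v v)) + (L *\<^sub>v v) \<bullet> (Dinv *\<^sub>v (Lb *\<^sub>v v)) - (Dinv *\<^sub>v (L *\<^sub>v v)) \<bullet> (D *\<^sub>v (Dinv *\<^sub>v (L *\<^sub>v v)))" using assms by (simp add: assoc_mult_mat_vec[of D p p "Dinv * L" n])
  finally show ?thesis .
qed

lemma diag_mult_vec:
  fixes D :: "real mat"
  assumes "D \<in> carrier_mat m m" "diagonal_mat D" "v \<in> carrier_vec m"
  shows "D *\<^sub>v v = vec m (\<lambda>j. D $$ (j,j) * v $ j)"
proof (rule eq_vecI)
  fix j assume "j < dim_vec (vec m (\<lambda>j. D $$ (j,j) * v $ j))"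
  then have j: "j < m" by simp
  have "(D *\<^sub>v v) $ j = (\<Sum>l\<in>{0..<m}. D $$ (j,l) * v $ l)"
    using assms j by (simp add: mult_mat_vec_def scalar_prod_def row_def)
  also have "\<dots> = (\<Sum>l\<in>{0..<m}. (if l = j then D $$ (j,l) * v $ l else 0))"
    by (rule sum.cong, insert assms j, auto simp: diagonal_mat_def)
  also have "\<dots> = D $$ (j,j) * v $ j" by (subst sum.delta) (simp_all add: j)
  finally show "(D *\<^sub>v v) $ j = vec m (\<lambda>j. D $$ (j,j) * v $ j) $ j" using j by simp
qed (insert assms, auto)

lemma diag_mult_mat:
  fixes D X :: "real mat"
  assumes "D \<in> carrier_mat m m" "diagonal_mat D" "X \<in> carrier_mat m n"
  shows "D * X = mat m n (\<lambda>(j,k). D $$ (j,j) * X $$ (j,k))"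
proof (rule eq_matI)
  fix j k assume jk: "j < dim_row (mat m n (\<lambda>(j,k). D $$ (j,j) * X $$ (j,k)))" "k < dim_col (mat m n (\<lambda>(j,k). D $$ (j,j) * X $$ (j,k)))"
  then have j: "j < m" and k: "k < n" by auto
  have "(D * X) $$ (j,k) = (\<Sum>l\<in>{0..<m}. D $$ (j,l) * X $$ (l,k))"
    using assms j k by (simp add: scalar_prod_def)
  also have "\<dots> = (\<Sum>l\<in>{0..<m}. (if l = j then D $$ (j,l) * X $$ (l,k) else 0))"
    by (rule sum.cong, insert assms j, auto simp: diagonal_mat_def)
  also have "\<dots> = D $$ (j,j) * X $$ (j,k)" by (subst sum.delta) (simp_all add: j)
  finally show "(D * X) $$ (j,k) = mat m n (\<lambda>(j,k). D $$ (j,j) * X $$ (j,k)) $$ (j,k)" using j k by simp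
qed (insert assms, auto)

lemma diag_inv:
  fixes D X :: "real mat"
  assumes "diag_pos_mat m D" "X \<in> carrier_mat m m" "D * X = 1\<^sub>m m"
  shows "X = mat m m (\<lambda>(j,k). if j = k then 1 / D $$ (j,j) else 0)"
proof (rule eq_matI)
  fix j k assume jk: "j < dim_row (mat m m (\<lambda>(j,k). if j = k then 1 / D $$ (j,j) else 0))" "k < dim_col (mat m m (\<lambda>(j,k). if j = k then 1 / D $$ (j,j) else (0::real)))"
  then have j: "j < m" and k: "k < m" by auto
  have D: "D \<in> carrier_mat m m" "diagonal_mat D" "D $$ (j,j) > 0" using assms j unfolding diag_pos_mat_def by auto
  have "(D * X) $$ (j,k) = D $$ (j,j) * X $$ (j,k)" using diag_mult_mat[OF D(1,2) assms(2)] j k by simp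
  then have "D $$ (j,j) * X $$ (j,k) = (if j = k then 1 else 0)" using assms(3) j k by simp
  then show "X $$ (j,k) = mat m m (\<lambda>(j,k). if j = k then 1 / D $$ (j,j) else 0) $$ (j,k)"
    using j k D(3) by (auto simp: field_simps)
qed (insert assms, auto)

lemma diag_inv_props:
  fixes D X :: "real mat"
  assumes "diag_pos_mat m D" "X \<in> carrier_mat m m" "D * X = 1\<^sub>m m"
  shows "diag_pos_mat m X" "X * D = 1\<^sub>m m" "transpose_mat X = X" "\<And>j. j < m \<Longrightarrow> X $$ (j,j) = 1 / D $$ (j,j)"
proof -
  note e = diag_inv[OF assms]
  have D: "D \<in> carrier_mat m m" "diagonal_mat D" "\<And>j. j<m \<Longrightarrow> D $$ (j,j) > 0" using assms unfolding diag_pos_mat_def by auto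
  show "diag_pos_mat m X" unfolding diag_pos_mat_def diagonal_mat_def e using D by auto
  show "\<And>j. j < m \<Longrightarrow> X $$ (j,j) = 1 / D $$ (j,j)" unfolding e by simp
  show "transpose_mat X = X" unfolding e by (rule eq_matI, auto)
  have dX: "diagonal_mat X" unfolding diagonal_mat_def e by auto
  show "X * D = 1\<^sub>m m"
    unfolding diag_mult_mat[OF assms(2) dX D(1)] by (rule eq_matI, insert D, auto simp: e diagonal_mat_def dest: less_imp_neq[OF D(3)])
qed

lemma diag_sym: "diag_pos_mat m D \<Longrightarrow> transpose_mat D = D"
  unfolding diag_pos_mat_def diagonal_mat_def by (intro eq_matI, auto, metis)

lemma diag_quad:
  fixes D :: "real mat"
  assumes "D \<in> carrier_mat m m" "diagonal_mat D" "v \<in> carrier_vec m" "w \<in> carrier_vec m"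
  shows "v \<bullet> (D *\<^sub>v w) = (\<Sum>j\<in>{0..<m}. D $$ (j,j) * v $ j * w $ j)"
  unfolding diag_mult_vec[OF assms(1,2,4)] using assms by (auto simp: scalar_prod_def intro!: sum.cong)

lemma zero_mat_vec[simp]: "v \<in> carrier_vec k \<Longrightarrow> (0\<^sub>m n k :: real mat) *\<^sub>v v = 0\<^sub>v n"
  by (intro eq_vecI, auto simp: scalar_prod_def)

lemma scal_carrier[simp]: "scal_mat a \<in> carrier_mat 1 1" unfolding scal_mat_def by auto
lemma scal_dim[simp]: "dim_row (scal_mat a) = 1" "dim_col (scal_mat a) = 1" unfolding scal_mat_def by auto

lemma Lop_carrier: "Lb \<in> carrier_mat p n \<Longrightarrow> L \<in> carrier_mat p n \<Longrightarrow> D \<in> carrier_mat p p \<Longrightarrow> Dinv \<in> carrier_mat p p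
  \<Longrightarrow> Lop Lb D L Dinv \<in> carrier_mat n n"
  unfolding Lop_def by auto

lemma LMI_quad:
  fixes Pbar B K Dbar Ab Bb Kb Dh :: "real mat"
  assumes P: "Pbar \<in> carrier_mat m nx" and i: "i < m" and B: "B \<in> carrier_mat nx nu" and K: "K \<in> carrier_mat nu nx"
    and Db: "Dbar \<in> carrier_mat m m" "transpose_mat Dbar = Dbar"
    and Ab: "Ab \<in> carrier_mat nx nx" and Bb: "Bb \<in> carrier_mat nx nu" and Kb: "Kb \<in> carrier_mat nu nx"
    and bb: "bb \<in> carrier_vec m" and Dh: "Dh \<in> carrier_mat m m"
    and u: "u \<in> carrier_vec nu" and w: "w \<in> carrier_vec m" and y: "y \<in> carrier_vec nx"
  defines "q \<equiv> row Pbar i"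
  defines "c \<equiv> transpose_mat Bb *\<^sub>v q" and "c0 \<equiv> transpose_mat B *\<^sub>v q"
    and "ky \<equiv> Kb *\<^sub>v y" and "k0 \<equiv> K *\<^sub>v y" and "z \<equiv> Pbar *\<^sub>v y" and "v \<equiv> Dbar *\<^sub>v (Pbar *\<^sub>v y)"
  defines "Pr \<equiv> row_mat Pbar i"
  defines "M13 \<equiv> - (transpose_mat Bb * transpose_mat Pr)"
    and "M23 \<equiv> mat_of_cols m [bb]"
    and "M33 \<equiv> scal_mat (2 * bb $ i)
                + Lop (transpose_mat Bb * transpose_mat Pr) (1\<^sub>m nu)
                      (transpose_mat B * transpose_mat Pr) (1\<^sub>m nu)"
    and "M34 \<equiv> Pr * Ab"
    and "M44 \<equiv> Lop Pbar Dh Pbar Dbar + Lop Kb (1\<^sub>m nu) K (1\<^sub>m nu)"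
  shows "((u @\<^sub>v w) @\<^sub>v (vec 1 (\<lambda>_. s) @\<^sub>v y)) \<bullet> (block4 (1\<^sub>m nu) (0\<^sub>m nu m) M13 Kb
                   (transpose_mat (0\<^sub>m nu m)) Dh M23 (0\<^sub>m m nx)
                   (transpose_mat M13) (transpose_mat M23) M33 M34
                   (transpose_mat Kb) (transpose_mat (0\<^sub>m m nx)) (transpose_mat M34) M44 *\<^sub>v ((u @\<^sub>v w) @\<^sub>v (vec 1 (\<lambda>_. s) @\<^sub>v y)))
    = u \<bullet> u - 2 * s * (u \<bullet> c) + 2 * (u \<bullet> ky) + w \<bullet> (Dh *\<^sub>v w) + 2 * s * (w \<bullet> bb)
      + s * s * (2 * bb $ i + 2 * (c \<bullet> c0) - c0 \<bullet> c0) + 2 * s * (q \<bullet> (Ab *\<^sub>v y))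
      + 2 * (z \<bullet> v) - v \<bullet> (Dh *\<^sub>v v) + 2 * (ky \<bullet> k0) - k0 \<bullet> k0"
proof -
  let ?x3 = "vec 1 (\<lambda>_. s) :: real vec"
  have x3: "?x3 \<in> carrier_vec 1" by simp
  have q: "q \<in> carrier_vec nx" unfolding q_def using P i by auto
  have Pr: "Pr \<in> carrier_mat 1 nx" "Pr = mat_of_row q" unfolding Pr_def row_mat_def q_def using P i by auto
  have PiT: "transpose_mat Pr \<in> carrier_mat nx 1" using Pr by auto
  have c: "c \<in> carrier_vec nu" "c0 \<in> carrier_vec nu" unfolding c_def c0_def using Bb B q by auto
  have kk: "ky \<in> carrier_vec nu" "k0 \<in> carrier_vec nu" unfolding ky_def k0_def using Kb K y by auto
  have zv: "z \<in> carrier_vec m" "v \<in> carrier_vec m" unfolding z_def v_def using P Db y by auto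
  have cM13: "M13 \<in> carrier_mat nu 1" unfolding M13_def using Bb PiT by auto
  have cM23: "M23 \<in> carrier_mat m 1" unfolding M23_def by auto
  have cL1: "transpose_mat Bb * transpose_mat Pr \<in> carrier_mat nu 1" "transpose_mat B * transpose_mat Pr \<in> carrier_mat nu 1"
    using Bb B PiT by auto
  have cLop1: "Lop (transpose_mat Bb * transpose_mat Pr) (1\<^sub>m nu) (transpose_mat B * transpose_mat Pr) (1\<^sub>m nu) \<in> carrier_mat 1 1"
    by (rule Lop_carrier[OF cL1], auto)
  have cM33: "M33 \<in> carrier_mat 1 1" unfolding M33_def using cLop1 by auto
  have cM34: "M34 \<in> carrier_mat 1 nx" unfolding M34_def using Pr Ab by auto
  have cLP: "Lop Pbar Dh Pbar Dbar \<in> carrier_mat nx nx" by (rule Lop_carrier[OF P P Dh Db(1)])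
  have cLK: "Lop Kb (1\<^sub>m nu) K (1\<^sub>m nu) \<in> carrier_mat nx nx" by (rule Lop_carrier[OF Kb K], auto)
  have cM44: "M44 \<in> carrier_mat nx nx" unfolding M44_def using cLP cLK by auto
  note Q = quad4_sym[OF one_carrier_mat zero_carrier_mat cM13 Kb Dh cM23 zero_carrier_mat cM33 cM34 cM44 u w x3 y]
  have PiTx: "transpose_mat Pr *\<^sub>v ?x3 = s \<cdot>\<^sub>v q" unfolding Pr(2) by (rule F1[OF q])
  have Lbx: "(transpose_mat Bb * transpose_mat Pr) *\<^sub>v ?x3 = s \<cdot>\<^sub>v c"
  proof -
    have "(transpose_mat Bb * transpose_mat Pr) *\<^sub>v ?x3 = transpose_mat Bb *\<^sub>v (transpose_mat Pr *\<^sub>v ?x3)"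
      by (rule assoc_mult_mat_vec[of _ nu nx _ 1], insert Bb PiT, auto)
    also have "\<dots> = s \<cdot>\<^sub>v c" unfolding PiTx c_def by (rule mult_mat_vec[of _ nu nx], insert Bb q, auto)
    finally show ?thesis .
  qed
  have Lx: "(transpose_mat B * transpose_mat Pr) *\<^sub>v ?x3 = s \<cdot>\<^sub>v c0"
  proof -
    have "(transpose_mat B * transpose_mat Pr) *\<^sub>v ?x3 = transpose_mat B *\<^sub>v (transpose_mat Pr *\<^sub>v ?x3)"
      by (rule assoc_mult_mat_vec[of _ nu nx _ 1], insert B PiT, auto)
    also have "\<dots> = s \<cdot>\<^sub>v c0" unfolding PiTx c0_def by (rule mult_mat_vec[of _ nu nx], insert B q, auto)
    finally show ?thesis .
  qed
  have T13: "u \<bullet> (M13 *\<^sub>v ?x3) = - (s * (u \<bullet> c))"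
  proof -
    have "(- (transpose_mat Bb * transpose_mat Pr)) *\<^sub>v ?x3 = - (s \<cdot>\<^sub>v c)"
      unfolding Lbx[symmetric] by (rule uminus_mult_mat_vec, insert cL1 Pr, simp)
    then show ?thesis unfolding M13_def using u c by simp
  qed
  have T33: "?x3 \<bullet> (M33 *\<^sub>v ?x3) = s * s * (2 * bb $ i + 2 * (c \<bullet> c0) - c0 \<bullet> c0)"
  proof -
    have "?x3 \<bullet> (M33 *\<^sub>v ?x3) = ?x3 \<bullet> (scal_mat (2 * bb $ i) *\<^sub>v ?x3) +
        ?x3 \<bullet> (Lop (transpose_mat Bb * transpose_mat Pr) (1\<^sub>m nu) (transpose_mat B * transpose_mat Pr) (1\<^sub>m nu) *\<^sub>v ?x3)"
      unfolding M33_def add_mult_distrib_mat_vec[OF scal_carrier cLop1 x3] by (rule scalar_prod_add_distrib[of _ 1], insert cLop1 mult_mat_vec_carrier[OF scal_carrier x3], auto)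
    also have "\<dots> = s * s * (2 * bb $ i) + (s * s * (c \<bullet> c0) + s * s * (c0 \<bullet> c) - s * s * (c0 \<bullet> c0))"
      unfolding F3 quadL[OF cL1 one_carrier_mat one_carrier_mat transpose_one x3] Lbx Lx using c by simp
    also have "\<dots> = s * s * (2 * bb $ i + 2 * (c \<bullet> c0) - c0 \<bullet> c0)"
      using comm_scalar_prod[OF c] by (simp add: algebra_simps)
    finally show ?thesis .
  qed
  have T23: "w \<bullet> (M23 *\<^sub>v ?x3) = s * (w \<bullet> bb)" unfolding M23_def by (rule F4[OF w bb])
  have T34: "?x3 \<bullet> (M34 *\<^sub>v y) = s * (q \<bullet> (Ab *\<^sub>v y))"
  proof -
    have "(Pr * Ab) *\<^sub>v y = Pr *\<^sub>v (Ab *\<^sub>v y)" by (rule assoc_mult_mat_vec[OF Pr(1) Ab y])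
    then show ?thesis unfolding M34_def using F2[OF q, of "Ab *\<^sub>v y" s] Pr(2) Ab y by simp
  qed
  have T44: "y \<bullet> (M44 *\<^sub>v y) = 2 * (z \<bullet> v) - v \<bullet> (Dh *\<^sub>v v) + 2 * (ky \<bullet> k0) - k0 \<bullet> k0"
  proof -
    have "y \<bullet> (M44 *\<^sub>v y) = y \<bullet> (Lop Pbar Dh Pbar Dbar *\<^sub>v y) + y \<bullet> (Lop Kb (1\<^sub>m nu) K (1\<^sub>m nu) *\<^sub>v y)"
      unfolding M44_def add_mult_distrib_mat_vec[OF cLP cLK y] by (rule scalar_prod_add_distrib[of _ nx], insert cLP cLK y, auto)
    also have "\<dots> = (z \<bullet> v + z \<bullet> v - v \<bullet> (Dh *\<^sub>v v)) + (ky \<bullet> k0 + k0 \<bullet> ky - k0 \<bullet> k0)"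
      unfolding quadL[OF P P Dh Db y] quadL[OF Kb K one_carrier_mat one_carrier_mat transpose_one y]
      using kk unfolding z_def v_def ky_def k0_def by simp
    also have "\<dots> = 2 * (z \<bullet> v) - v \<bullet> (Dh *\<^sub>v v) + 2 * (ky \<bullet> k0) - k0 \<bullet> k0"
      using comm_scalar_prod[OF kk] by simp
    finally show ?thesis .
  qed
  show ?thesis unfolding Q using T13 T33 T23 T34 T44 u w y unfolding ky_def by simp
qed

lemma sp_sum: "v \<in> carrier_vec n \<Longrightarrow> w \<in> carrier_vec n \<Longrightarrow> v \<bullet> w = (\<Sum>j\<in>{0..<n}. v $ j * w $ (j::nat))"
  unfolding scalar_prod_def by auto

lemma grpA:
  fixes u c c0 ky k0 :: "real vec"
  assumes v: "u \<in> carrier_vec n" "c \<in> carrier_vec n" "c0 \<in> carrier_vec n" "ky \<in> carrier_vec n" "k0 \<in> carrier_vec n"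
   and u: "u = s \<cdot>\<^sub>v c - ky"
  shows "-(u \<bullet> u) + 2 * s * (u \<bullet> c) - 2 * (u \<bullet> ky) - s * s * (2 * (c \<bullet> c0) - c0 \<bullet> c0) + 2 * s * (c \<bullet> ky) - 2 * (ky \<bullet> k0) + k0 \<bullet> k0 \<ge> 0"
proof -
  let ?F = "\<lambda>j. -(u$j * u$j) + 2 * s * (u$j * c$j) - 2 * (u$j * ky$j) - s * s * (2 * (c$j * c0$j) - c0$j * c0$j) + 2 * s * (c$j * ky$j) - 2 * (ky$j * k0$j) + k0$j * k0$j"
  have e: "-(u \<bullet> u) + 2 * s * (u \<bullet> c) - 2 * (u \<bullet> ky) - s * s * (2 * (c \<bullet> c0) - c0 \<bullet> c0) + 2 * s * (c \<bullet> ky) - 2 * (ky \<bullet> k0) + k0 \<bullet> k0 = (\<Sum>j\<in>{0..<n}. ?F j)"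
    using v by (simp add: sp_sum[of _ n] sum.distrib sum_subtractf sum_distrib_left sum_negf right_diff_distrib)
  have "?F j \<ge> 0" if j: "j < n" for j
  proof -
    have uj: "u $ j = s * c $ j - ky $ j" using u v j by simp
    have "?F j = (s * c$j - s * c0$j)^2 + (ky$j - k0$j)^2" unfolding uj by (simp add: algebra_simps power2_eq_square)
    then show ?thesis by simp
  qed
  then show ?thesis unfolding e by (intro sum_nonneg, auto)
qed

locale dpair =
  fixes m :: nat and D E :: "real mat"
  assumes D: "diag_pos_mat m D" and E: "E \<in> carrier_mat m m" "diagonal_mat E" "\<And>j. j < m \<Longrightarrow> E $$ (j,j) = 1 / D $$ (j,j)"
begin

lemma Dc: "D \<in> carrier_mat m m" "diagonal_mat D" "\<And>j. j < m \<Longrightarrow> D $$ (j,j) > 0"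
  using D unfolding diag_pos_mat_def by auto

lemma Dq: "v \<in> carrier_vec m \<Longrightarrow> w \<in> carrier_vec m \<Longrightarrow> v \<bullet> (D *\<^sub>v w) = (\<Sum>j\<in>{0..<m}. D $$ (j,j) * v $ j * w $ j)"
  by (rule diag_quad[OF Dc(1,2)])
lemma Eq: "v \<in> carrier_vec m \<Longrightarrow> w \<in> carrier_vec m \<Longrightarrow> v \<bullet> (E *\<^sub>v w) = (\<Sum>j\<in>{0..<m}. v $ j * w $ j / D $$ (j,j))"
  unfolding diag_quad[OF E(1,2)] by (intro sum.cong, auto simp: E(3))

lemma A2:
  assumes "w \<in> carrier_vec m" "b \<in> carrier_vec m"
  shows "w \<bullet> (E *\<^sub>v w) + 2 * s * (w \<bullet> b) + s * s * (b \<bullet> (D *\<^sub>v b)) = (\<Sum>j\<in>{0..<m}. (w$j + s * D$$(j,j) * b$j)^2 / D$$(j,j))"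
proof -
  let ?F = "\<lambda>j. w $ j * w $ j / D $$ (j,j) + 2 * s * (w$j * b$j) + s * s * (D $$ (j,j) * b $ j * b $ j)"
  have e: "w \<bullet> (E *\<^sub>v w) + 2 * s * (w \<bullet> b) + s * s * (b \<bullet> (D *\<^sub>v b)) = (\<Sum>j\<in>{0..<m}. ?F j)"
    using assms by (simp add: Eq Dq sp_sum[of _ m] sum.distrib sum_distrib_left)
  show ?thesis unfolding e
  proof (intro sum.cong refl)
    fix j assume "j \<in> {0..<m}"
    then have "D $$ (j,j) > 0" using Dc(3) by auto
    then show "?F j = (w$j + s * D$$(j,j) * b$j)^2 / D$$(j,j)" by (simp add: field_simps power2_eq_square)
  qed
qed

lemma A3:
  assumes "z \<in> carrier_vec m"
  shows "2 * (z \<bullet> (D *\<^sub>v z)) - (D *\<^sub>v z) \<bullet> (E *\<^sub>v (D *\<^sub>v z)) - z \<bullet> (D *\<^sub>v z) = 0"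
proof -
  have dz: "D *\<^sub>v z = vec m (\<lambda>j. D $$ (j,j) * z $ j)" by (rule diag_mult_vec[OF Dc(1,2) assms])
  have "(D *\<^sub>v z) \<bullet> (E *\<^sub>v (D *\<^sub>v z)) = (\<Sum>j\<in>{0..<m}. D $$ (j,j) * z $ j * z $ j)"
    unfolding Eq[OF mult_mat_vec_carrier[OF Dc(1) assms] mult_mat_vec_carrier[OF Dc(1) assms]]
  proof (intro sum.cong refl)
    fix j assume "j \<in> {0..<m}"
    then have "D $$ (j,j) > 0" "j < m" using Dc(3) by auto
    then show "(D *\<^sub>v z) $ j * (D *\<^sub>v z) $ j / D $$ (j,j) = D $$ (j,j) * z $ j * z $ j" unfolding dz by (simp add: field_simps)
  qed
  then show ?thesis using Dq[OF assms assms] by simp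
qed

lemma B2:
  assumes "bb \<in> carrier_vec m" "w = - (s \<cdot>\<^sub>v (E *\<^sub>v bb))"
  shows "-(w \<bullet> (D *\<^sub>v w)) - 2 * s * (w \<bullet> bb) - s * s * (bb \<bullet> (E *\<^sub>v bb)) = 0"
proof -
  have ew: "E *\<^sub>v bb = vec m (\<lambda>j. bb $ j / D $$ (j,j))"
    unfolding diag_mult_vec[OF E(1,2) assms(1)] by (intro eq_vecI, auto simp: E(3))
  have w: "w = vec m (\<lambda>j. - (s * (bb $ j / D $$ (j,j))))" unfolding assms(2) ew by (intro eq_vecI, auto)
  have wc: "w \<in> carrier_vec m" unfolding w by simp
  let ?F = "\<lambda>j. -(D $$ (j,j) * w $ j * w $ j) - 2 * s * (w $ j * bb $ j) - s * s * (bb $ j * bb $ j / D $$ (j,j))"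
  have e: "-(w \<bullet> (D *\<^sub>v w)) - 2 * s * (w \<bullet> bb) - s * s * (bb \<bullet> (E *\<^sub>v bb)) = (\<Sum>j\<in>{0..<m}. ?F j)"
    unfolding Eq[OF assms(1) assms(1)] Dq[OF wc wc]
    using assms wc by (simp add: sp_sum[of _ m] sum.distrib sum_distrib_left sum_subtractf sum_negf)
  have "?F j = 0" if "j < m" for j
    using that Dc(3)[OF that] unfolding w by (auto simp: field_simps)
  then show ?thesis unfolding e by simp
qed

lemma B3:
  assumes "z \<in> carrier_vec m" "v \<in> carrier_vec m"
  shows "z \<bullet> (E *\<^sub>v z) - 2 * (z \<bullet> v) + v \<bullet> (D *\<^sub>v v) \<ge> 0"
proof -
  let ?F = "\<lambda>j. z $ j * z $ j / D $$ (j,j) - 2 * (z$j * v$j) + D $$ (j,j) * v $ j * v $ j"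
  have e: "z \<bullet> (E *\<^sub>v z) - 2 * (z \<bullet> v) + v \<bullet> (D *\<^sub>v v) = (\<Sum>j\<in>{0..<m}. ?F j)"
    using assms by (simp add: Eq Dq sp_sum[of _ m] sum.distrib sum_distrib_left sum_subtractf)
  have "?F j \<ge> 0" if "j < m" for j
  proof -
    have "?F j = (z $ j - D $$ (j,j) * v $ j)^2 / D $$ (j,j)" using Dc(3)[OF that] by (auto simp: field_simps power2_eq_square)
    then show ?thesis using Dc(3)[OF that] by simp
  qed
  then show ?thesis unfolding e by (intro sum_nonneg, auto)
qed

end

lemma A1:
  fixes u c k :: "real vec"
  assumes "u \<in> carrier_vec n" "c \<in> carrier_vec n" "k \<in> carrier_vec n"
  shows "u \<bullet> u - 2 * s * (u \<bullet> c) + 2 * (u \<bullet> k) + s * s * (c \<bullet> c) + k \<bullet> k - 2 * s * (c \<bullet> k) = (\<Sum>j\<in>{0..<n}. (u$j - s * c$j + k$j)^2)"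
proof -
  let ?F = "\<lambda>j. u$j * u$j - 2 * s * (u$j * c$j) + 2 * (u$j * k$j) + s * s * (c$j * c$j) + k$j * k$j - 2 * s * (c$j * k$j)"
  have e: "u \<bullet> u - 2 * s * (u \<bullet> c) + 2 * (u \<bullet> k) + s * s * (c \<bullet> c) + k \<bullet> k - 2 * s * (c \<bullet> k) = (\<Sum>j\<in>{0..<n}. ?F j)"
    using assms by (simp add: sp_sum[of _ n] sum.distrib sum_subtractf sum_distrib_left)
  show ?thesis unfolding e by (intro sum.cong refl, auto simp: algebra_simps power2_eq_square)
qed

lemma PI_quad:
  fixes Pbar G X :: "real mat"
  assumes P: "Pbar \<in> carrier_mat m nx" and i: "i < m" and G: "G \<in> carrier_mat nx nx" and X: "X \<in> carrier_mat m m"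
    and y: "y \<in> carrier_vec nx"
  shows "(vec 1 (\<lambda>_. s) @\<^sub>v y) \<bullet> (four_block_mat (scal_mat a) (row_mat Pbar i * G) (transpose_mat (row_mat Pbar i * G))
      (transpose_mat Pbar * X * Pbar) *\<^sub>v (vec 1 (\<lambda>_. s) @\<^sub>v y))
    = s * s * a + 2 * s * (row Pbar i \<bullet> (G *\<^sub>v y)) + (Pbar *\<^sub>v y) \<bullet> (X *\<^sub>v (Pbar *\<^sub>v y))"
proof -
  have q: "row Pbar i \<in> carrier_vec nx" using P i by auto
  have Pr: "row_mat Pbar i \<in> carrier_mat 1 nx" "row_mat Pbar i = mat_of_row (row Pbar i)"
    unfolding row_mat_def using q by auto
  have cR: "row_mat Pbar i * G \<in> carrier_mat 1 nx" using Pr G by auto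
  have cPXP: "transpose_mat Pbar * X * Pbar \<in> carrier_mat nx nx" using P X by auto
  have x3: "vec 1 (\<lambda>_. s) \<in> carrier_vec 1" by simp
  have t2: "vec 1 (\<lambda>_. s) \<bullet> ((row_mat Pbar i * G) *\<^sub>v y) = s * (row Pbar i \<bullet> (G *\<^sub>v y))"
  proof -
    have "(row_mat Pbar i * G) *\<^sub>v y = row_mat Pbar i *\<^sub>v (G *\<^sub>v y)" by (rule assoc_mult_mat_vec[OF Pr(1) G y])
    then show ?thesis using F2[OF q, of "G *\<^sub>v y" s] Pr(2) G y by simp
  qed
  have t3: "y \<bullet> ((transpose_mat Pbar * X * Pbar) *\<^sub>v y) = (Pbar *\<^sub>v y) \<bullet> (X *\<^sub>v (Pbar *\<^sub>v y))"
  proof -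
    have "(transpose_mat Pbar * X * Pbar) *\<^sub>v y = (transpose_mat Pbar * X) *\<^sub>v (Pbar *\<^sub>v y)"
      by (rule assoc_mult_mat_vec[of _ nx m _ nx], insert P X y, auto)
    also have "\<dots> = transpose_mat Pbar *\<^sub>v (X *\<^sub>v (Pbar *\<^sub>v y))"
      by (rule assoc_mult_mat_vec[of _ nx m _ m], insert P X y, auto)
    finally have "(transpose_mat Pbar * X * Pbar) *\<^sub>v y = transpose_mat Pbar *\<^sub>v (X *\<^sub>v (Pbar *\<^sub>v y))" .
    then show ?thesis using tr_sp[OF P, of "X *\<^sub>v (Pbar *\<^sub>v y)" y] P X y
       comm_scalar_prod[of "X *\<^sub>v (Pbar *\<^sub>v y)" m "Pbar *\<^sub>v y"] by simp
  qed
  show ?thesis unfolding quad2_sym[OF scal_carrier cR cPXP x3 y] F3 t2 t3 by simp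
qed

lemma sym11: "M \<in> carrier_mat 1 1 \<Longrightarrow> transpose_mat M = M"
  by (intro eq_matI, auto)

lemma tr3:
  fixes X Y Z :: "real mat"
  assumes "X \<in> carrier_mat p n" "Y \<in> carrier_mat p p" "Z \<in> carrier_mat p n"
  shows "transpose_mat (transpose_mat X * Y * Z) = transpose_mat Z * transpose_mat Y * X"
proof -
  have "transpose_mat (transpose_mat X * Y * Z) = transpose_mat Z * transpose_mat (transpose_mat X * Y)"
    by (rule transpose_mult[of _ n p], insert assms, auto)
  also have "transpose_mat (transpose_mat X * Y) = transpose_mat Y * X"
    using transpose_mult[of "transpose_mat X" n p Y p] assms by auto
  finally show ?thesis using assms by (simp add: assoc_mult_mat[of _ n p _ p _ n])
qed

lemma PI_mat_props:
  fixes Pbar G X :: "real mat" and a :: real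
  assumes P: "Pbar \<in> carrier_mat m nx" and i: "i < m" and G: "G \<in> carrier_mat nx nx" and X: "X \<in> carrier_mat m m"
    and Xs: "transpose_mat X = X"
  defines "M \<equiv> four_block_mat (scal_mat a) (row_mat Pbar i * G) (transpose_mat (row_mat Pbar i * G))
      (transpose_mat Pbar * X * Pbar)"
  shows "M \<in> carrier_mat (1 + nx) (1 + nx)" "transpose_mat M = M"
proof -
  have q: "row Pbar i \<in> carrier_vec nx" using P i by auto
  have Pr: "row_mat Pbar i \<in> carrier_mat 1 nx" unfolding row_mat_def using q by auto
  have cR: "row_mat Pbar i * G \<in> carrier_mat 1 nx" using Pr G by auto
  have cPXP: "transpose_mat Pbar * X * Pbar \<in> carrier_mat nx nx" using P X by auto
  show "M \<in> carrier_mat (1 + nx) (1 + nx)" unfolding M_def using four_block_carrier_mat[OF scal_carrier cPXP] by simp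
  have s: "transpose_mat (transpose_mat Pbar * X * Pbar) = transpose_mat Pbar * X * Pbar"
    using tr3[OF P X P] Xs by simp
  show "transpose_mat M = M" unfolding M_def
    transpose_four_block_mat[OF scal_carrier cR transpose_carrier_mat[THEN iffD2, OF cR] cPXP] s sym11[OF scal_carrier]
    by simp
qed


lemma Lop_sym:
  fixes Lb L D Dinv :: "real mat"
  assumes "Lb \<in> carrier_mat p n" "L \<in> carrier_mat p n" "D \<in> carrier_mat p p" "Dinv \<in> carrier_mat p p"
    "transpose_mat Dinv = Dinv" "transpose_mat D = D"
  shows "transpose_mat (Lop Lb D L Dinv) = Lop Lb D L Dinv"
proof -
  have 1: "transpose_mat (transpose_mat X * Y * Z) = transpose_mat Z * transpose_mat Y * X"
    if "X \<in> carrier_mat p n" "Y \<in> carrier_mat p p" "Z \<in> carrier_mat p n" for X Y Z :: "real mat"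
  proof -
    have "transpose_mat (transpose_mat X * Y * Z) = transpose_mat Z * transpose_mat (transpose_mat X * Y)"
      by (rule transpose_mult[of _ n p], insert that, auto)
    also have "transpose_mat (transpose_mat X * Y) = transpose_mat Y * X"
      using transpose_mult[of "transpose_mat X" n p Y p] that by auto
    finally show ?thesis using that by (simp add: assoc_mult_mat[of _ n p _ p _ n])
  qed
  have 2: "transpose_mat (transpose_mat L * Dinv * D * Dinv * L) = transpose_mat L * Dinv * D * Dinv * L"
  proof -
    have tW: "transpose_mat (Dinv * L) = transpose_mat L * Dinv" using transpose_mult[of Dinv p p L n] assms by simp
    have a: "transpose_mat L * Dinv * D * Dinv * L = transpose_mat (Dinv * L) * D * (Dinv * L)"
      unfolding tW by (rule assoc_mult_mat[of _ n p _ p _ n], insert assms, auto)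
    have "transpose_mat (transpose_mat L * Dinv * D * Dinv * L) = transpose_mat (Dinv * L) * transpose_mat D * (Dinv * L)"
      unfolding a by (rule 1, insert assms, auto)
    also have "\<dots> = transpose_mat L * Dinv * D * Dinv * L" unfolding a assms(6) ..
    finally show ?thesis .
  qed
  have cA: "transpose_mat Lb * Dinv * L \<in> carrier_mat n n" "transpose_mat L * Dinv * Lb \<in> carrier_mat n n"
    "transpose_mat L * Dinv * D * Dinv * L \<in> carrier_mat n n" using assms by auto
  have cAB: "transpose_mat Lb * Dinv * L + transpose_mat L * Dinv * Lb \<in> carrier_mat n n" using cA by auto
  show ?thesis unfolding Lop_def transpose_minus[OF cAB cA(3)] transpose_add[OF cA(1,2)] 2
    1[OF assms(1,4,2)] 1[OF assms(2,4,1)] assms(5)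
    by (subst comm_add_mat[OF cA(2) cA(1)], rule refl)
qed

lemma block4_sym:
  fixes M11 M12 M13 M14 M22 M23 M24 M33 M34 M44 :: "real mat"
  assumes c: "M11 \<in> carrier_mat n1 n1" "M12 \<in> carrier_mat n1 n2" "M13 \<in> carrier_mat n1 n3" "M14 \<in> carrier_mat n1 n4"
     "M22 \<in> carrier_mat n2 n2" "M23 \<in> carrier_mat n2 n3" "M24 \<in> carrier_mat n2 n4"
     "M33 \<in> carrier_mat n3 n3" "M34 \<in> carrier_mat n3 n4" "M44 \<in> carrier_mat n4 n4"
   and s: "transpose_mat M11 = M11" "transpose_mat M22 = M22" "transpose_mat M33 = M33" "transpose_mat M44 = M44"
  shows "transpose_mat (block4 M11 M12 M13 M14
                   (transpose_mat M12) M22 M23 M24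
                   (transpose_mat M13) (transpose_mat M23) M33 M34
                   (transpose_mat M14) (transpose_mat M24) (transpose_mat M34) M44) = block4 M11 M12 M13 M14
                   (transpose_mat M12) M22 M23 M24
                   (transpose_mat M13) (transpose_mat M23) M33 M34
                   (transpose_mat M14) (transpose_mat M24) (transpose_mat M34) M44"
proof -
  have cA: "four_block_mat M11 M12 (transpose_mat M12) M22 \<in> carrier_mat (n1+n2) (n1+n2)" using c by auto
  have cB: "four_block_mat M13 M14 M23 M24 \<in> carrier_mat (n1+n2) (n3+n4)" using c by auto
  have cC: "four_block_mat (transpose_mat M13) (transpose_mat M23) (transpose_mat M14) (transpose_mat M24) \<in> carrier_mat (n3+n4) (n1+n2)" using c by auto
  have cD: "four_block_mat M33 M34 (transpose_mat M34) M44 \<in> carrier_mat (n3+n4) (n3+n4)" using c by auto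
  show ?thesis unfolding block4_def transpose_four_block_mat[OF cA cB cC cD]
    using c s by (simp add: transpose_four_block_mat[of _ n1 n1 _ n2 _ n2] transpose_four_block_mat[of _ n1 n3 _ n4 _ n2]
       transpose_four_block_mat[of _ n3 n1 _ n2 _ n4] transpose_four_block_mat[of _ n3 n3 _ n4 _ n4])
qed

lemma append_zero_iff:
  assumes "a \<in> carrier_vec n1" "b \<in> carrier_vec n2"
  shows "(a @\<^sub>v b = 0\<^sub>v (n1 + n2)) \<longleftrightarrow> a = 0\<^sub>v n1 \<and> b = 0\<^sub>v n2"
proof
  assume z: "a @\<^sub>v b = 0\<^sub>v (n1 + n2)"
  have "a $ j = 0" if "j < n1" for j using arg_cong[OF z, of "\<lambda>v. v $ j"] that assms by auto
  moreover have "b $ j = 0" if "j < n2" for j using arg_cong[OF z, of "\<lambda>v. v $ (n1 + j)"] that assms by auto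
  ultimately show "a = 0\<^sub>v n1 \<and> b = 0\<^sub>v n2" using assms by (auto intro!: eq_vecI)
qed (insert assms, auto intro!: eq_vecI)

lemma split2: assumes "x \<in> carrier_vec (n1 + n2)" obtains a b where "a \<in> carrier_vec n1" "b \<in> carrier_vec n2" "x = a @\<^sub>v b"
  using vec_first_last_append[OF assms] vec_first_carrier vec_last_carrier by metis

lemma vec1: "x \<in> carrier_vec 1 \<Longrightarrow> x = vec 1 (\<lambda>_. x $ 0)"
  by (intro eq_vecI, auto)

lemma partB:
  fixes Pbar B K Dbar Ab Bb Kb Dh Dh_inv :: "real mat"
  assumes P: "Pbar \<in> carrier_mat m nx" and i: "i < m" and B: "B \<in> carrier_mat nx nu" and K: "K \<in> carrier_mat nu nx"
    and Db: "Dbar \<in> carrier_mat m m" "transpose_mat Dbar = Dbar"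
    and Ab: "Ab \<in> carrier_mat nx nx" and Bb: "Bb \<in> carrier_mat nx nu" and Kb: "Kb \<in> carrier_mat nu nx"
    and bb: "bb \<in> carrier_vec m" and Dh: "diag_pos_mat m Dh"
    and X: "Dh_inv \<in> carrier_mat m m" "inverts_mat Dh Dh_inv"
    and LMI: "LMI_i nx nu m Pbar i B K Dbar Ab Bb Kb bb Dh"
  shows "PI_cond nx Pbar i Ab Bb Kb bb Dh_inv"
proof -
  have Dhc: "Dh \<in> carrier_mat m m" using Dh unfolding diag_pos_mat_def by auto
  have inv: "Dh * Dh_inv = 1\<^sub>m m" using X(2) Dhc unfolding inverts_mat_def by simp
  note XP = diag_inv_props[OF Dh X(1) inv]
  interpret dp: dpair m Dh Dh_inv
    by (unfold_locales, insert Dh X(1) XP, auto simp: diag_pos_mat_def)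
  let ?q = "row Pbar i"
  let ?c = "transpose_mat Bb *\<^sub>v ?q"
  let ?cz = "transpose_mat B *\<^sub>v ?q"
  have q: "?q \<in> carrier_vec nx" using P i by auto
  have c: "?c \<in> carrier_vec nu" "?cz \<in> carrier_vec nu" using Bb B q by auto
  let ?G = "Ab + Bb * Kb"
  have G: "?G \<in> carrier_mat nx nx" using Ab Bb Kb by auto
  note MP = PI_mat_props[OF P i G X(1) XP(3), of "2 * bb $ i - bb \<bullet> (Dh_inv *\<^sub>v bb)"]
  show ?thesis unfolding PI_cond_def pos_def_mat_def
  proof (intro conjI ballI impI)
    fix x' :: "real vec" assume x': "x' \<in> carrier_vec (1 + nx)" "x' \<noteq> 0\<^sub>v (1 + nx)"
    obtain x3 y where x3: "x3 \<in> carrier_vec 1" and y: "y \<in> carrier_vec nx" and xe: "x' = x3 @\<^sub>v y"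
      using split2[OF x'(1)] by metis
    define s where "s = x3 $ 0"
    have x3e: "x3 = vec 1 (\<lambda>_. s)" unfolding s_def using vec1[OF x3] .
    let ?ky = "Kb *\<^sub>v y"
    let ?kz = "K *\<^sub>v y"
    let ?z = "Pbar *\<^sub>v y"
    let ?v = "Dbar *\<^sub>v (Pbar *\<^sub>v y)"
    have kk: "?ky \<in> carrier_vec nu" "?kz \<in> carrier_vec nu" using Kb K y by auto
    have zv: "?z \<in> carrier_vec m" "?v \<in> carrier_vec m" using P Db y by auto
    define u where "u = s \<cdot>\<^sub>v ?c - ?ky"
    define w where "w = - (s \<cdot>\<^sub>v (Dh_inv *\<^sub>v bb))"
    have u: "u \<in> carrier_vec nu" unfolding u_def using c kk by auto
    have w: "w \<in> carrier_vec m" unfolding w_def using X(1) bb by auto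
    let ?xx = "(u @\<^sub>v w) @\<^sub>v (vec 1 (\<lambda>_. s) @\<^sub>v y)"
    have xxc: "?xx \<in> carrier_vec (nu + m + 1 + nx)"
      using append_carrier_vec[OF append_carrier_vec[OF u w] append_carrier_vec[OF x3 y]] x3e by (simp add: add.assoc)
    have "vec 1 (\<lambda>_. s) @\<^sub>v y \<noteq> 0\<^sub>v (1 + nx)" using x'(2) xe x3e by simp
    then have xxnz: "?xx \<noteq> 0\<^sub>v (nu + m + 1 + nx)"
      using append_zero_iff[OF append_carrier_vec[OF u w] append_carrier_vec[OF x3 y]] x3e by (simp add: add.assoc)
    note LQ = LMI_quad[OF P i B K Db Ab Bb Kb bb Dhc u w y, of s]
    have Qpos: "0 < u \<bullet> u - 2 * s * (u \<bullet> ?c) + 2 * (u \<bullet> ?ky) + w \<bullet> (Dh *\<^sub>v w) + 2 * s * (w \<bullet> bb)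
      + s * s * (2 * bb $ i + 2 * (?c \<bullet> ?cz) - ?cz \<bullet> ?cz) + 2 * s * (?q \<bullet> (Ab *\<^sub>v y))
      + 2 * (?z \<bullet> ?v) - ?v \<bullet> (Dh *\<^sub>v ?v) + 2 * (?ky \<bullet> ?kz) - ?kz \<bullet> ?kz"
      using LMI[unfolded LMI_i_def Let_def pos_def_mat_def, THEN conjunct2, THEN conjunct2, rule_format, OF xxc xxnz]
      unfolding LQ .
    have gA: "-(u \<bullet> u) + 2 * s * (u \<bullet> ?c) - 2 * (u \<bullet> ?ky) - s * s * (2 * (?c \<bullet> ?cz) - ?cz \<bullet> ?cz) + 2 * s * (?c \<bullet> ?ky) - 2 * (?ky \<bullet> ?kz) + ?kz \<bullet> ?kz \<ge> 0"
      by (rule grpA[OF u c kk u_def])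
    have gB: "-(w \<bullet> (Dh *\<^sub>v w)) - 2 * s * (w \<bullet> bb) - s * s * (bb \<bullet> (Dh_inv *\<^sub>v bb)) = 0"
      by (rule dp.B2[OF bb w_def])
    have gC: "?z \<bullet> (Dh_inv *\<^sub>v ?z) - 2 * (?z \<bullet> ?v) + ?v \<bullet> (Dh *\<^sub>v ?v) \<ge> 0"
      by (rule dp.B3[OF zv])
    have Ge: "?q \<bullet> (?G *\<^sub>v y) = ?q \<bullet> (Ab *\<^sub>v y) + ?c \<bullet> ?ky"
    proof -
      have "?G *\<^sub>v y = Ab *\<^sub>v y + Bb *\<^sub>v ?ky"
        using Ab Bb Kb y by (simp add: add_mult_distrib_mat_vec[of _ nx nx])
      then have "?q \<bullet> (?G *\<^sub>v y) = ?q \<bullet> (Ab *\<^sub>v y) + ?q \<bullet> (Bb *\<^sub>v ?ky)"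
        using Ab Bb kk q y by (simp add: scalar_prod_add_distrib[of _ nx])
      also have "?q \<bullet> (Bb *\<^sub>v ?ky) = ?c \<bullet> ?ky"
        using tr_sp[OF Bb q kk(1)] comm_scalar_prod[OF kk(1) c(1)] by simp
      finally show ?thesis .
    qed
    show "0 < x' \<bullet> (four_block_mat (scal_mat (2 * bb $ i - bb \<bullet> (Dh_inv *\<^sub>v bb))) (row_mat Pbar i * ?G)
       (transpose_mat (row_mat Pbar i * ?G)) (transpose_mat Pbar * Dh_inv * Pbar) *\<^sub>v x')"
      unfolding xe x3e PI_quad[OF P i G X(1) y] Ge
      using Qpos gA gB gC by (simp only: ring_distribs)
  qed (insert MP, auto)
qed

lemma mat_vec_zero: "(A :: real mat) \<in> carrier_mat n k \<Longrightarrow> A *\<^sub>v 0\<^sub>v k = 0\<^sub>v n"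
  by (intro eq_vecI, auto simp: scalar_prod_def)

lemma vec_nz: assumes "v \<in> carrier_vec n" "v \<noteq> 0\<^sub>v n" shows "\<exists>j<n. v $ j \<noteq> (0::real)"
proof (rule ccontr)
  assume "\<not> ?thesis"
  then have "v = 0\<^sub>v n" using assms(1) by (intro eq_vecI, auto)
  then show False using assms(2) by simp
qed

lemma sumsq_pos: assumes "v \<in> carrier_vec n" "v \<noteq> 0\<^sub>v n" "\<And>j. j < n \<Longrightarrow> (d j :: real) > 0"
  shows "(\<Sum>j\<in>{0..<n}. (v $ j)^2 / d j) > 0"
proof -
  obtain j where j: "j < n" "v $ j \<noteq> 0" using vec_nz[OF assms(1,2)] by auto
  show ?thesis
    by (rule sum_pos2[of _ j], insert j assms(3), auto intro!: divide_nonneg_pos)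
qed

lemma partA:
  fixes Pbar A B K Dbar Dbar_inv :: "real mat"
  assumes P: "Pbar \<in> carrier_mat m nx" and i: "i < m"
    and A: "A \<in> carrier_mat nx nx" and B: "B \<in> carrier_mat nx nu" and K: "K \<in> carrier_mat nu nx"
    and b: "b \<in> carrier_vec m"
    and Db: "diag_pos_mat m Dbar"
    and X: "Dbar_inv \<in> carrier_mat m m" "inverts_mat Dbar Dbar_inv"
    and PI: "PI_cond nx Pbar i A B K b Dbar"
  shows "LMI_i nx nu m Pbar i B K Dbar A B K b Dbar_inv"
proof -
  have Dbc: "Dbar \<in> carrier_mat m m" using Db unfolding diag_pos_mat_def by auto
  have Dbs: "transpose_mat Dbar = Dbar" by (rule diag_sym[OF Db])
  have inv: "Dbar * Dbar_inv = 1\<^sub>m m" using X(2) Dbc unfolding inverts_mat_def by simp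
  note XP = diag_inv_props[OF Db X(1) inv]
  interpret dp: dpair m Dbar Dbar_inv
    by (unfold_locales, insert Db X(1) XP, auto simp: diag_pos_mat_def)
  let ?q = "row Pbar i"
  let ?c = "transpose_mat B *\<^sub>v ?q"
  have q: "?q \<in> carrier_vec nx" using P i by auto
  have c: "?c \<in> carrier_vec nu" using B q by auto
  let ?G = "A + B * K"
  have G: "?G \<in> carrier_mat nx nx" using A B K by auto
  let ?Pr = "row_mat Pbar i"
  have Pr: "?Pr \<in> carrier_mat 1 nx" unfolding row_mat_def using q by auto
  let ?M13 = "- (transpose_mat B * transpose_mat ?Pr)"
  let ?M23 = "mat_of_cols m [b]"
  let ?M33 = "scal_mat (2 * b $ i)
                + Lop (transpose_mat B * transpose_mat ?Pr) (1\<^sub>m nu)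
                      (transpose_mat B * transpose_mat ?Pr) (1\<^sub>m nu)"
  let ?M34 = "?Pr * A"
  let ?M44 = "Lop Pbar Dbar_inv Pbar Dbar + Lop K (1\<^sub>m nu) K (1\<^sub>m nu)"
  have cL1: "transpose_mat B * transpose_mat ?Pr \<in> carrier_mat nu 1" using B Pr by auto
  have cM13: "?M13 \<in> carrier_mat nu 1" using cL1 by auto
  have cM23: "?M23 \<in> carrier_mat m 1" by auto
  have cLop1: "Lop (transpose_mat B * transpose_mat ?Pr) (1\<^sub>m nu) (transpose_mat B * transpose_mat ?Pr) (1\<^sub>m nu) \<in> carrier_mat 1 1"
    by (rule Lop_carrier[OF cL1 cL1], auto)
  have cM33: "?M33 \<in> carrier_mat 1 1" using cLop1 by auto
  have cM34: "?M34 \<in> carrier_mat 1 nx" using Pr A by auto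
  have cLP: "Lop Pbar Dbar_inv Pbar Dbar \<in> carrier_mat nx nx" by (rule Lop_carrier[OF P P X(1) Dbc])
  have cLK: "Lop K (1\<^sub>m nu) K (1\<^sub>m nu) \<in> carrier_mat nx nx" by (rule Lop_carrier[OF K K], auto)
  have cM44: "?M44 \<in> carrier_mat nx nx" using cLP cLK by auto
  have s33: "transpose_mat ?M33 = ?M33" by (rule sym11[OF cM33])
  have s44: "transpose_mat ?M44 = ?M44"
    unfolding transpose_add[OF cLP cLK] Lop_sym[OF P P X(1) Dbc Dbs XP(3)] Lop_sym[OF K K one_carrier_mat one_carrier_mat transpose_one transpose_one] ..
  note SY = block4_sym[OF one_carrier_mat zero_carrier_mat cM13 K X(1) cM23 zero_carrier_mat cM33 cM34 cM44 transpose_one XP(3) s33 s44]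
  have CA: "block4 (1\<^sub>m nu) (0\<^sub>m nu m) ?M13 K
                   (transpose_mat (0\<^sub>m nu m)) Dbar_inv ?M23 (0\<^sub>m m nx)
                   (transpose_mat ?M13) (transpose_mat ?M23) ?M33 ?M34
                   (transpose_mat K) (transpose_mat (0\<^sub>m m nx)) (transpose_mat ?M34) ?M44 \<in> carrier_mat (nu + m + 1 + nx) (nu + m + 1 + nx)"
  proof -
    have eqN: "nu + m + (1 + nx) = nu + m + 1 + nx" by simp
    show ?thesis unfolding block4_def eqN[symmetric]
      by (rule four_block_carrier_mat[OF four_block_carrier_mat[OF one_carrier_mat X(1)] four_block_carrier_mat[OF cM33 cM44]])
  qed
  note PIpos = PI[unfolded PI_cond_def pos_def_mat_def, THEN conjunct2, THEN conjunct2, rule_format]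
  show ?thesis unfolding LMI_i_def Let_def pos_def_mat_def
  proof (intro conjI ballI impI CA SY)
    fix x :: "real vec" assume x: "x \<in> carrier_vec (nu + m + 1 + nx)" "x \<noteq> 0\<^sub>v (nu + m + 1 + nx)"
    have x': "x \<in> carrier_vec ((nu + m) + (1 + nx))" using x(1) by (simp add: add.assoc)
    obtain xa xb where xa: "xa \<in> carrier_vec (nu + m)" and xb: "xb \<in> carrier_vec (1 + nx)" and xe: "x = xa @\<^sub>v xb"
      using split2[OF x'] by metis
    obtain u w where u: "u \<in> carrier_vec nu" and w: "w \<in> carrier_vec m" and xae: "xa = u @\<^sub>v w"
      using split2[OF xa] by metis
    obtain x3 y where x3: "x3 \<in> carrier_vec 1" and y: "y \<in> carrier_vec nx" and xbe: "xb = x3 @\<^sub>v y"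
      using split2[OF xb] by metis
    define s where "s = x3 $ 0"
    have x3e: "x3 = vec 1 (\<lambda>_. s)" unfolding s_def using vec1[OF x3] .
    let ?k = "K *\<^sub>v y"
    let ?z = "Pbar *\<^sub>v y"
    have k: "?k \<in> carrier_vec nu" using K y by auto
    have z: "?z \<in> carrier_vec m" using P y by auto
    note LQ = LMI_quad[OF P i B K Dbc Dbs A B K b X(1) u w y, of s]
    have a1: "u \<bullet> u - 2 * s * (u \<bullet> ?c) + 2 * (u \<bullet> ?k) + s * s * (?c \<bullet> ?c) + ?k \<bullet> ?k - 2 * s * (?c \<bullet> ?k) = (\<Sum>j\<in>{0..<nu}. (u$j - s * ?c$j + ?k$j)^2)"
      by (rule A1[OF u c k])
    have a2: "w \<bullet> (Dbar_inv *\<^sub>v w) + 2 * s * (w \<bullet> b) + s * s * (b \<bullet> (Dbar *\<^sub>v b)) = (\<Sum>j\<in>{0..<m}. (w$j + s * Dbar$$(j,j) * b$j)^2 / Dbar$$(j,j))"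
      by (rule dp.A2[OF w b])
    have a3: "2 * (?z \<bullet> (Dbar *\<^sub>v ?z)) - (Dbar *\<^sub>v ?z) \<bullet> (Dbar_inv *\<^sub>v (Dbar *\<^sub>v ?z)) - ?z \<bullet> (Dbar *\<^sub>v ?z) = 0"
      by (rule dp.A3[OF z])
    have n1: "(\<Sum>j\<in>{0..<nu}. (u$j - s * ?c$j + ?k$j)^2) \<ge> 0" by (intro sum_nonneg, auto)
    have n2: "(\<Sum>j\<in>{0..<m}. (w$j + s * Dbar$$(j,j) * b$j)^2 / Dbar$$(j,j)) \<ge> 0"
      by (intro sum_nonneg divide_nonneg_pos, insert dp.Dc(3), auto)
    have Ge: "?q \<bullet> (?G *\<^sub>v y) = ?q \<bullet> (A *\<^sub>v y) + ?c \<bullet> ?k"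
    proof -
      have "?G *\<^sub>v y = A *\<^sub>v y + B *\<^sub>v ?k"
        using A B K y by (simp add: add_mult_distrib_mat_vec[of _ nx nx])
      then have "?q \<bullet> (?G *\<^sub>v y) = ?q \<bullet> (A *\<^sub>v y) + ?q \<bullet> (B *\<^sub>v ?k)"
        using A B k q y by (simp add: scalar_prod_add_distrib[of _ nx])
      also have "?q \<bullet> (B *\<^sub>v ?k) = ?c \<bullet> ?k"
        using tr_sp[OF B q k] comm_scalar_prod[OF k c] by simp
      finally show ?thesis .
    qed
    note PQ = PI_quad[OF P i G Dbc y, of s "2 * b $ i - b \<bullet> (Dbar *\<^sub>v b)", unfolded Ge]
    let ?PIQ = "s * s * (2 * b $ i - b \<bullet> (Dbar *\<^sub>v b)) + 2 * s * (?q \<bullet> (A *\<^sub>v y) + ?c \<bullet> ?k) + ?z \<bullet> (Dbar *\<^sub>v ?z)"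
    show "0 < x \<bullet> (block4 (1\<^sub>m nu) (0\<^sub>m nu m) ?M13 K
                   (transpose_mat (0\<^sub>m nu m)) Dbar_inv ?M23 (0\<^sub>m m nx)
                   (transpose_mat ?M13) (transpose_mat ?M23) ?M33 ?M34
                   (transpose_mat K) (transpose_mat (0\<^sub>m m nx)) (transpose_mat ?M34) ?M44 *\<^sub>v x)"
    proof (cases "x3 @\<^sub>v y = 0\<^sub>v (1 + nx)")
      case False
      have "0 < ?PIQ" using PIpos[OF append_carrier_vec[OF x3 y] False] unfolding x3e PQ .
      then show ?thesis unfolding xe xae xbe x3e LQ using a1 a2 a3 n1 n2
        by (simp only: ring_distribs, linarith?)
    next
      case True
      then have x30: "x3 = 0\<^sub>v 1" and y0: "y = 0\<^sub>v nx" using append_zero_iff[OF x3 y] by auto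
      have s0: "s = 0" unfolding s_def x30 by simp
      have k0: "?k = 0\<^sub>v nu" unfolding y0 by (rule mat_vec_zero[OF K])
      have z0: "?z = 0\<^sub>v m" unfolding y0 by (rule mat_vec_zero[OF P])
      have "xa \<noteq> 0\<^sub>v (nu + m)"
      proof
        assume xa0: "xa = 0\<^sub>v (nu + m)"
        have "x = 0\<^sub>v ((nu + m) + (1 + nx))" unfolding xe xa0 xbe True
          using append_zero_iff[of "0\<^sub>v (nu + m)" "nu + m" "0\<^sub>v (1 + nx)" "1 + nx"] by simp
        then show False using x(2) by (simp add: add.assoc)
      qed
      then have uw: "u \<noteq> 0\<^sub>v nu \<or> w \<noteq> 0\<^sub>v m" unfolding xae using append_zero_iff[OF u w] by auto
      have e1: "(\<Sum>j\<in>{0..<nu}. (u$j - s * ?c$j + ?k$j)^2) = (\<Sum>j\<in>{0..<nu}. (u$j)^2 / 1)"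
        unfolding s0 k0 by (intro sum.cong refl, auto)
      have e2: "(\<Sum>j\<in>{0..<m}. (w$j + s * Dbar$$(j,j) * b$j)^2 / Dbar$$(j,j)) = (\<Sum>j\<in>{0..<m}. (w$j)^2 / Dbar$$(j,j))"
        unfolding s0 by simp
      have p1: "(\<Sum>j\<in>{0..<nu}. (u$j)^2 / 1) \<ge> 0" by (intro sum_nonneg, auto)
      have p2: "(\<Sum>j\<in>{0..<m}. (w$j)^2 / Dbar$$(j,j)) \<ge> 0"
        by (intro sum_nonneg divide_nonneg_pos, insert dp.Dc(3), auto)
      have "(\<Sum>j\<in>{0..<nu}. (u$j)^2 / 1) > 0 \<or> (\<Sum>j\<in>{0..<m}. (w$j)^2 / Dbar$$(j,j)) > 0"
        using uw sumsq_pos[OF u, of "\<lambda>_. 1"] sumsq_pos[OF w, of "\<lambda>j. Dbar$$(j,j)"] dp.Dc(3) by auto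
      then have pos: "0 < (\<Sum>j\<in>{0..<nu}. (u$j - s * ?c$j + ?k$j)^2) + (\<Sum>j\<in>{0..<m}. (w$j + s * Dbar$$(j,j) * b$j)^2 / Dbar$$(j,j))"
        unfolding e1 e2 using p1 p2 by linarith
      have PIQ0: "?PIQ = 0" unfolding s0 z0 using mat_vec_zero[OF Dbc] by simp
      show ?thesis unfolding xe xae xbe x3e LQ using a1 a2 a3 pos PIQ0
        by (simp only: ring_distribs, linarith?)
    qed
  qed
qed

theorem theorem3:
  fixes nx nu m i :: nat
    and Pbar A B K Dbar Dbar_inv :: "real mat" and b :: "real vec"
  assumes "Pbar \<in> carrier_mat m nx" and "i < m"
    and "A \<in> carrier_mat nx nx" and "B \<in> carrier_mat nx nu" and "K \<in> carrier_mat nu nx"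
    and "b \<in> carrier_vec m"
    and "diag_pos_mat m Dbar"
    and "Dbar_inv \<in> carrier_mat m m" and "inverts_mat Dbar Dbar_inv"
    and "PI_cond nx Pbar i A B K b Dbar"
  shows "LMI_i nx nu m Pbar i B K Dbar A B K b Dbar_inv
    \<and> (\<forall>Ab Bb Kb bb Dh Dh_inv.
          Ab \<in> carrier_mat nx nx \<longrightarrow> Bb \<in> carrier_mat nx nu \<longrightarrow> Kb \<in> carrier_mat nu nx \<longrightarrow>
          bb \<in> carrier_vec m \<longrightarrow> diag_pos_mat m Dh \<longrightarrow>
          Dh_inv \<in> carrier_mat m m \<longrightarrow> inverts_mat Dh Dh_inv \<longrightarrow>
          LMI_i nx nu m Pbar i B K Dbar Ab Bb Kb bb Dh \<longrightarrow>
          PI_cond nx Pbar i Ab Bb Kb bb Dh_inv)"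
proof -
  have Dbc: "Dbar \<in> carrier_mat m m" using assms(7) unfolding diag_pos_mat_def by auto
  have Dbs: "transpose_mat Dbar = Dbar" by (rule diag_sym[OF assms(7)])
  show ?thesis
  proof (intro conjI allI impI)
    show "LMI_i nx nu m Pbar i B K Dbar A B K b Dbar_inv"
      by (rule partA[OF assms(1-10)])
  next
    fix Ab Bb Kb :: "real mat" and bb :: "real vec" and Dh Dh_inv :: "real mat"
    assume h: "Ab \<in> carrier_mat nx nx" "Bb \<in> carrier_mat nx nu" "Kb \<in> carrier_mat nu nx"
      "bb \<in> carrier_vec m" "diag_pos_mat m Dh" "Dh_inv \<in> carrier_mat m m" "inverts_mat Dh Dh_inv"
      "LMI_i nx nu m Pbar i B K Dbar Ab Bb Kb bb Dh"
    show "PI_cond nx Pbar i Ab Bb Kb bb Dh_inv"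
      by (rule partB[OF assms(1,2,4,5) Dbc Dbs h])
  qed
qed

end
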